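(* Let $n\geq 1$ and $d\geq 1$ be integers, and let $p(x)=p(x_1,\ldots,x_n)$ be any form (homogeneous polynomial) of degree $2d$ with real coefficients. Then there exists $\lambda\in\mathbb{R}$ such that the form $p(x)-\lambda\left(\sum_{i=1}^n x_i^2\right)^d$ is dsos.
   Context: Let $z(x,d)$ denote the vector of all monomials of degree exactly $d$ in the variables $x=(x_1,\ldots,x_n)$ (of length $\binom{n+d-1}{d}$). A real symmetric matrix $Q=(q_{ij})$ is diagonally dominant (dd) if $q_{ii}\geq \sum_{j\neq i}|q_{ij}|$ for all $i$. A form $f$ of degree $2d$ in $n$ variables is called diagonally-dominant-sum-of-squares (dsos) if there exists a diagonally dominant symmetric matrix $Q$ such that $f(x)=z(x,d)^T Q\, z(x,d)$ identically. *)

theory Defs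
  imports Complex_Main
begin

text \<open>Exponent vectors of monomials of degree exactly k in the variables x_0,...,x_(n-1).\<close>
definition mons :: "nat \<Rightarrow> nat \<Rightarrow> (nat \<Rightarrow> nat) set" where
  "mons n k = {\<alpha>. (\<forall>i\<ge>n. \<alpha> i = 0) \<and> (\<Sum>i<n. \<alpha> i) = k}"

definition monom :: "nat \<Rightarrow> (nat \<Rightarrow> nat) \<Rightarrow> (nat \<Rightarrow> real) \<Rightarrow> real" where
  "monom n \<alpha> x = (\<Prod>i<n. x i ^ \<alpha> i)"

definition is_form :: "nat \<Rightarrow> nat \<Rightarrow> ((nat \<Rightarrow> real) \<Rightarrow> real) \<Rightarrow> bool" where
  "is_form n k f \<longleftrightarrow> (\<exists>c :: (nat \<Rightarrow> nat) \<Rightarrow> real.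
      \<forall>x. f x = (\<Sum>\<alpha>\<in>mons n k. c \<alpha> * monom n \<alpha> x))"

definition dd_sym :: "'a set \<Rightarrow> ('a \<Rightarrow> 'a \<Rightarrow> real) \<Rightarrow> bool" where
  "dd_sym I Q \<longleftrightarrow> (\<forall>i\<in>I. \<forall>j\<in>I. Q i j = Q j i) \<and>
     (\<forall>i\<in>I. Q i i \<ge> (\<Sum>j\<in>I - {i}. \<bar>Q i j\<bar>))"

text \<open>f is dsos: f(x) = z(x,d)^T Q z(x,d) identically with Q symmetric diagonally dominant;
  the vector z(x,d) is indexed by the monomials of degree d.\<close>
definition dsos :: "nat \<Rightarrow> nat \<Rightarrow> ((nat \<Rightarrow> real) \<Rightarrow> real) \<Rightarrow> bool" where
  "dsos n d f \<longleftrightarrow> (\<exists>Q. dd_sym (mons n d) Q \<and>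
     (\<forall>x. f x = (\<Sum>\<alpha>\<in>mons n d. \<Sum>\<beta>\<in>mons n d. monom n \<alpha> x * Q \<alpha> \<beta> * monom n \<beta> x)))"

end

theory Submission
  imports Defs
begin

lemma finite_mons: "finite (mons n k)"
proof -
  have "mons n k \<subseteq> {f. \<forall>x. (x \<in> {..<n} \<longrightarrow> f x \<in> {..k}) \<and> (x \<notin> {..<n} \<longrightarrow> f x = 0)}"
  proof
    fix f assume f: "f \<in> mons n k"
    have "\<And>x. x < n \<Longrightarrow> f x \<le> k"
    proof -
      fix x assume "x < n"
      then have "f x \<le> (\<Sum>i<n. f i)" by (intro member_le_sum) auto
      then show "f x \<le> k" using f by (simp add: mons_def)
    qed
    then show "f \<in> {f. \<forall>x. (x \<in> {..<n} \<longrightarrow> f x \<in> {..k}) \<and> (x \<notin> {..<n} \<longrightarrow> f x = 0)}"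
      using f by (auto simp: mons_def)
  qed
  moreover have "finite {f. \<forall>x. (x \<in> {..<n} \<longrightarrow> f x \<in> {..k}) \<and> (x \<notin> {..<n} \<longrightarrow> (f x::nat) = 0)}"
    by (rule finite_set_of_finite_funs) auto
  ultimately show ?thesis by (rule finite_subset)
qed

lemma monom_add: "monom n (\<lambda>i. a i + b i) x = monom n a x * monom n b x"
  by (simp add: monom_def power_add prod.distrib)

lemma mons_add: "a \<in> mons n k \<Longrightarrow> b \<in> mons n l \<Longrightarrow> (\<lambda>i. a i + b i) \<in> mons n (k + l)"
  by (simp add: mons_def sum.distrib)

lemma split_exists:
  "g \<in> mons n (k + l) \<Longrightarrow> \<exists>a b. a \<in> mons n k \<and> b \<in> mons n l \<and> (\<lambda>i. a i + b i) = g"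
proof (induction k arbitrary: l)
  case 0
  then show ?case by (intro exI[of _ "\<lambda>_. 0"] exI[of _ g]) (simp add: mons_def)
next
  case (Suc k)
  from Suc.prems have "g \<in> mons n (k + Suc l)" by simp
  from Suc.IH[OF this] obtain a b where ab: "a \<in> mons n k" "b \<in> mons n (Suc l)" "(\<lambda>i. a i + b i) = g" by blast
  from ab(2) have "(\<Sum>i<n. b i) = Suc l" by (simp add: mons_def)
  then obtain j where j: "j < n" "b j > 0"
    by (metis lessThan_iff neq0_conv sum.neutral zero_neq_numeral Zero_not_Suc)
  define a' where "a' = a(j := Suc (a j))"
  define b' where "b' = b(j := b j - 1)"
  have fin: "finite {..<n}" by simp
  have "(\<Sum>i<n. a' i) = a' j + (\<Sum>i\<in>{..<n}-{j}. a' i)" using j by (simp add: sum.remove[OF fin])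
  also have "(\<Sum>i\<in>{..<n}-{j}. a' i) = (\<Sum>i\<in>{..<n}-{j}. a i)" by (rule sum.cong) (auto simp: a'_def)
  also have "a' j + \<dots> = Suc (a j + (\<Sum>i\<in>{..<n}-{j}. a i))" by (simp add: a'_def)
  also have "a j + (\<Sum>i\<in>{..<n}-{j}. a i) = (\<Sum>i<n. a i)" using j by (simp add: sum.remove[OF fin])
  finally have sa: "(\<Sum>i<n. a' i) = Suc k" using ab(1) by (simp add: mons_def)
  have "(\<Sum>i<n. b i) = b j + (\<Sum>i\<in>{..<n}-{j}. b i)" using j by (simp add: sum.remove[OF fin])
  moreover have "(\<Sum>i<n. b' i) = b' j + (\<Sum>i\<in>{..<n}-{j}. b' i)" using j by (simp add: sum.remove[OF fin])
  moreover have "(\<Sum>i\<in>{..<n}-{j}. b' i) = (\<Sum>i\<in>{..<n}-{j}. b i)" by (rule sum.cong) (auto simp: b'_def)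
  ultimately have sb: "(\<Sum>i<n. b' i) = l" using j \<open>(\<Sum>i<n. b i) = Suc l\<close> by (simp add: b'_def)
  have "a' \<in> mons n (Suc k)" using sa ab(1) j by (auto simp: mons_def a'_def)
  moreover have "b' \<in> mons n l" using sb ab(2) j by (auto simp: mons_def b'_def)
  moreover have "(\<lambda>i. a' i + b' i) = g" unfolding fun_eq_iff
  proof
    fix i show "a' i + b' i = g i" using ab(3) j by (cases "i = j") (auto simp: a'_def b'_def fun_eq_iff, metis Suc_pred add_gr_0)
  qed
  ultimately show ?case by blast
qed

lemma regroup:
  fixes F :: "(nat \<Rightarrow> nat) \<Rightarrow> (nat \<Rightarrow> nat) \<Rightarrow> real"
  shows "(\<Sum>a\<in>mons n k. \<Sum>b\<in>mons n l. F a b * H (\<lambda>i. a i + b i)) =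
    (\<Sum>g\<in>mons n (k+l). (\<Sum>s\<in>{s\<in>mons n k \<times> mons n l. (\<lambda>i. fst s i + snd s i) = g}. F (fst s) (snd s)) * H g)"
proof -
  let ?S = "mons n k \<times> mons n l"
  let ?G = "\<lambda>s. (\<lambda>i. fst s i + snd s i)"
  have "(\<Sum>a\<in>mons n k. \<Sum>b\<in>mons n l. F a b * H (\<lambda>i. a i + b i)) = (\<Sum>s\<in>?S. F (fst s) (snd s) * H (?G s))"
    by (simp add: sum.cartesian_product case_prod_beta')
  also have "\<dots> = (\<Sum>g\<in>mons n (k+l). \<Sum>s\<in>{s\<in>?S. ?G s = g}. F (fst s) (snd s) * H (?G s))"
    by (rule sum.group[symmetric]) (auto simp: finite_mons intro: mons_add)
  also have "\<dots> = (\<Sum>g\<in>mons n (k+l). (\<Sum>s\<in>{s\<in>?S. ?G s = g}. F (fst s) (snd s)) * H g)"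
    by (rule sum.cong[OF refl]) (simp add: sum_distrib_right)
  finally show ?thesis .
qed

lemma fiber_nonempty:
  "g \<in> mons n (k + l) \<Longrightarrow> {s\<in>mons n k \<times> mons n l. (\<lambda>i. fst s i + snd s i) = g} \<noteq> {}"
  using split_exists[of g n k l] by auto

lemma fiber_finite: "finite {s\<in>mons n k \<times> mons n l. P s}"
  using finite_mons by auto

lemma prod_rep:
  assumes u: "\<forall>a\<in>mons n k. u a > 0" and v: "\<forall>b\<in>mons n l. v b > 0"
  shows "\<exists>w. (\<forall>g\<in>mons n (k+l). w g > 0) \<and>
     (\<forall>x. (\<Sum>a\<in>mons n k. u a * (monom n a x)^2) * (\<Sum>b\<in>mons n l. v b * (monom n b x)^2)
        = (\<Sum>g\<in>mons n (k+l). w g * (monom n g x)^2))"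
proof -
  define w where "w g = (\<Sum>s\<in>{s\<in>mons n k \<times> mons n l. (\<lambda>i. fst s i + snd s i) = g}. u (fst s) * v (snd s))" for g
  have "\<forall>g\<in>mons n (k+l). w g > 0"
  proof
    fix g assume g: "g \<in> mons n (k+l)"
    show "w g > 0" unfolding w_def
      by (rule sum_pos[OF fiber_finite fiber_nonempty[OF g]]) (use u v in \<open>auto intro!: mult_pos_pos\<close>)
  qed
  moreover have "(\<Sum>a\<in>mons n k. u a * (monom n a x)^2) * (\<Sum>b\<in>mons n l. v b * (monom n b x)^2)
        = (\<Sum>g\<in>mons n (k+l). w g * (monom n g x)^2)" for x
  proof -
    have "(\<Sum>a\<in>mons n k. u a * (monom n a x)^2) * (\<Sum>b\<in>mons n l. v b * (monom n b x)^2)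
      = (\<Sum>a\<in>mons n k. \<Sum>b\<in>mons n l. (u a * v b) * (\<lambda>g. (monom n g x)^2) (\<lambda>i. a i + b i))"
      by (simp add: sum_product monom_add power_mult_distrib mult_ac)
    also have "\<dots> = (\<Sum>g\<in>mons n (k+l). w g * (monom n g x)^2)"
      unfolding w_def by (rule regroup)
    finally show ?thesis .
  qed
  ultimately show ?thesis by blast
qed

lemma mons0: "mons n 0 = {\<lambda>_. 0}"
  by (auto simp: mons_def fun_eq_iff) (metis not_le lessThan_iff)

lemma mons1: "mons n 1 = (\<lambda>i j. if j = i then 1 else 0) ` {..<n}"
proof
  show "(\<lambda>i j. if j = i then 1 else 0) ` {..<n} \<subseteq> mons n 1"
    by (auto simp: mons_def)
next
  show "mons n 1 \<subseteq> (\<lambda>i j. if j = i then 1 else 0) ` {..<n}"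
  proof
    fix b assume b: "b \<in> mons n 1"
    then have s: "(\<Sum>i<n. b i) = 1" and z: "\<forall>i\<ge>n. b i = 0" by (auto simp: mons_def)
    then obtain j where j: "j < n" "b j > 0"
      by (metis lessThan_iff neq0_conv sum.neutral zero_neq_one)
    have fin: "finite {..<n}" by simp
    have "(\<Sum>i<n. b i) = b j + (\<Sum>i\<in>{..<n}-{j}. b i)" using j by (simp add: sum.remove[OF fin])
    with s j have bj: "b j = 1" and r: "(\<Sum>i\<in>{..<n}-{j}. b i) = 0" by arith+
    from r have "\<forall>i\<in>{..<n}-{j}. b i = 0" by simp
    with bj z have "b = (\<lambda>i. if i = j then 1 else 0)" by (auto simp: fun_eq_iff) (metis Diff_iff lessThan_iff not_le singletonD)
    then show "b \<in> (\<lambda>i j. if j = i then 1 else 0) ` {..<n}" using j by blast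
  qed
qed

lemma sumsq_rep: "(\<Sum>i<n. (x i)^2) = (\<Sum>b\<in>mons n 1. 1 * (monom n b x)^2)"
proof -
  have inj: "inj_on (\<lambda>i j. if j = i then (1::nat) else 0) {..<n}"
    by (auto simp: inj_on_def fun_eq_iff)
  have m: "monom n (\<lambda>j. if j = i then 1 else 0) x = x i" if "i < n" for i
    using that by (simp add: monom_def if_distrib prod.delta' cong: if_cong)
  show ?thesis unfolding mons1 by (simp add: sum.reindex[OF inj] m)
qed

lemma pow_rep: "\<exists>m. (\<forall>a\<in>mons n d. m a > 0) \<and> (\<forall>x. (\<Sum>i<n. (x i)^2)^d = (\<Sum>a\<in>mons n d. m a * (monom n a x)^2))"
proof (induction d)
  case 0
  show ?case by (intro exI[of _ "\<lambda>_. 1"]) (simp add: mons0 monom_def)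
next
  case (Suc d)
  then obtain m where m: "\<forall>a\<in>mons n d. m a > 0" "\<forall>x. (\<Sum>i<n. (x i)^2)^d = (\<Sum>a\<in>mons n d. m a * (monom n a x)^2)" by blast
  have one: "\<forall>b\<in>mons n 1. (1::real) > 0" by simp
  from prod_rep[OF m(1) one] obtain w where w: "\<forall>g\<in>mons n (d+1). w g > 0"
    "\<forall>x. (\<Sum>a\<in>mons n d. m a * (monom n a x)^2) * (\<Sum>b\<in>mons n 1. 1 * (monom n b x)^2)
        = (\<Sum>g\<in>mons n (d+1). w g * (monom n g x)^2)" by blast
  show ?case
  proof (intro exI[of _ w] conjI)
    show "\<forall>a\<in>mons n (Suc d). w a > 0" using w(1) by simp
    show "\<forall>x. (\<Sum>i<n. (x i)^2)^Suc d = (\<Sum>a\<in>mons n (Suc d). w a * (monom n a x)^2)"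
    proof
      fix x :: "nat \<Rightarrow> real"
      have "(\<Sum>i<n. (x i)^2)^Suc d = (\<Sum>i<n. (x i)^2)^d * (\<Sum>i<n. (x i)^2)" by (rule power_Suc2)
      also have "\<dots> = (\<Sum>g\<in>mons n (d+1). w g * (monom n g x)^2)"
      proof -
        have e1: "(\<Sum>i<n. (x i)^2)^d = (\<Sum>a\<in>mons n d. m a * (monom n a x)^2)" using m(2) by blast
        have "(\<Sum>i<n. (x i)^2)^d * (\<Sum>i<n. (x i)^2) = (\<Sum>a\<in>mons n d. m a * (monom n a x)^2) * (\<Sum>i<n. (x i)^2)"
          by (simp only: e1)
        also have "\<dots> = (\<Sum>a\<in>mons n d. m a * (monom n a x)^2) * (\<Sum>b\<in>mons n 1. 1 * (monom n b x)^2)"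
          by (simp only: sumsq_rep[where x=x and n=n])
        also have "\<dots> = (\<Sum>g\<in>mons n (d+1). w g * (monom n g x)^2)" by (rule w(2)[rule_format])
        finally show ?thesis .
      qed
      finally show "(\<Sum>i<n. (x i)^2)^Suc d = (\<Sum>a\<in>mons n (Suc d). w a * (monom n a x)^2)" by simp
    qed
  qed
qed

lemma form_rep:
  assumes "is_form n (2*d) p"
  shows "\<exists>P. (\<forall>a b. P a b = P b a) \<and>
    (\<forall>x. p x = (\<Sum>a\<in>mons n d. \<Sum>b\<in>mons n d. monom n a x * P a b * monom n b x))"
proof -
  from assms obtain c where c: "\<forall>x. p x = (\<Sum>g\<in>mons n (2*d). c g * monom n g x)" by (auto simp: is_form_def)
  define N where "N g = card {s\<in>mons n d \<times> mons n d. (\<lambda>i. fst s i + snd s i) = g}" for g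
  define P where "P a b = c (\<lambda>i. a i + b i) / real (N (\<lambda>i. a i + b i))" for a b
  have sym: "\<forall>a b. P a b = P b a" by (simp add: P_def add.commute)
  have "p x = (\<Sum>a\<in>mons n d. \<Sum>b\<in>mons n d. monom n a x * P a b * monom n b x)" for x
  proof -
    have "(\<Sum>a\<in>mons n d. \<Sum>b\<in>mons n d. monom n a x * P a b * monom n b x)
      = (\<Sum>a\<in>mons n d. \<Sum>b\<in>mons n d. 1 * (\<lambda>g. c g / real (N g) * monom n g x) (\<lambda>i. a i + b i))"
      by (simp add: P_def monom_add mult_ac)
    also have "\<dots> = (\<Sum>g\<in>mons n (d+d). (\<Sum>s\<in>{s\<in>mons n d \<times> mons n d. (\<lambda>i. fst s i + snd s i) = g}. 1) * (c g / real (N g) * monom n g x))"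
      by (rule regroup)
    also have "\<dots> = (\<Sum>g\<in>mons n (2*d). c g * monom n g x)"
    proof (rule sum.cong)
      show "mons n (d+d) = mons n (2*d)" by (simp add: mult_2)
    next
      fix g assume g: "g \<in> mons n (2*d)"
      then have "g \<in> mons n (d+d)" by (simp add: mult_2)
      from fiber_nonempty[OF this] fiber_finite have "N g > 0" unfolding N_def
        by (simp add: card_gt_0_iff)
      then show "(\<Sum>s\<in>{s\<in>mons n d \<times> mons n d. (\<lambda>i. fst s i + snd s i) = g}. 1) * (c g / real (N g) * monom n g x) = c g * monom n g x"
        by (simp add: N_def[symmetric])
    qed
    finally show ?thesis using c by simp
  qed
  with sym show ?thesis by blast
qed

theorem theorem3:
  fixes n d :: nat and p :: "(nat \<Rightarrow> real) \<Rightarrow> real"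
  assumes "n \<ge> 1" and "d \<ge> 1" and "is_form n (2 * d) p"
  shows "\<exists>lam :: real. dsos n d (\<lambda>x. p x - lam * (\<Sum>i<n. (x i)\<^sup>2) ^ d)"
proof -
  let ?M = "mons n d"
  from form_rep[OF assms(3)] obtain P where P: "\<forall>a b. P a b = P b a"
    "\<forall>x. p x = (\<Sum>a\<in>?M. \<Sum>b\<in>?M. monom n a x * P a b * monom n b x)" by blast
  from pow_rep[of n d] obtain m where m: "\<forall>a\<in>?M. m a > 0"
    "\<forall>x. (\<Sum>i<n. (x i)^2)^d = (\<Sum>a\<in>?M. m a * (monom n a x)^2)" by blast
  define K where "K a = (\<Sum>b\<in>?M. \<bar>P a b\<bar>)" for a
  define lam where "lam = - (\<Sum>a\<in>?M. K a / m a)"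
  define Q where "Q a b = P a b - lam * (if a = b then m a else 0)" for a b
  have fin: "finite ?M" by (rule finite_mons)
  have dd: "dd_sym ?M Q"
    unfolding dd_sym_def
  proof (intro conjI ballI)
    fix a b show "Q a b = Q b a" using P(1) by (auto simp: Q_def)
  next
    fix a assume a: "a \<in> ?M"
    have Kn: "K b / m b \<ge> 0" if "b \<in> ?M" for b
      using m(1) that by (auto simp: K_def intro!: divide_nonneg_pos sum_nonneg)
    have "K a / m a \<le> - lam" unfolding lam_def minus_minus using a fin Kn by (intro member_le_sum) auto
    then have "K a / m a * m a \<le> - lam * m a" using m(1) a by (intro mult_right_mono) auto
    then have h1: "K a \<le> - lam * m a" using m(1) a by (auto split: if_splits)
    have h2: "K a = \<bar>P a a\<bar> + (\<Sum>b\<in>?M - {a}. \<bar>P a b\<bar>)" unfolding K_def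
      using a fin by (simp add: sum.remove)
    have h3: "(\<Sum>b\<in>?M - {a}. \<bar>Q a b\<bar>) = (\<Sum>b\<in>?M - {a}. \<bar>P a b\<bar>)"
      by (rule sum.cong) (auto simp: Q_def)
    show "Q a a \<ge> (\<Sum>b\<in>?M - {a}. \<bar>Q a b\<bar>)"
      using h1 h2 h3 by (simp add: Q_def)
  qed
  have eq: "p x - lam * (\<Sum>i<n. (x i)\<^sup>2) ^ d = (\<Sum>a\<in>?M. \<Sum>b\<in>?M. monom n a x * Q a b * monom n b x)" for x
  proof -
    have inner: "(\<Sum>b\<in>?M. monom n a x * Q a b * monom n b x) =
       (\<Sum>b\<in>?M. monom n a x * P a b * monom n b x) - lam * (m a * (monom n a x)^2)" if a: "a \<in> ?M" for a
    proof -
      have "(\<Sum>b\<in>?M. monom n a x * Q a b * monom n b x) =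
        (\<Sum>b\<in>?M. monom n a x * P a b * monom n b x - (if a = b then lam * (m a * (monom n a x)^2) else 0))"
        by (rule sum.cong) (auto simp: Q_def algebra_simps power2_eq_square)
      also have "\<dots> = (\<Sum>b\<in>?M. monom n a x * P a b * monom n b x) - lam * (m a * (monom n a x)^2)"
        using a fin by (simp add: sum_subtractf sum.delta)
      finally show ?thesis .
    qed
    have "(\<Sum>a\<in>?M. \<Sum>b\<in>?M. monom n a x * Q a b * monom n b x) =
      (\<Sum>a\<in>?M. (\<Sum>b\<in>?M. monom n a x * P a b * monom n b x) - lam * (m a * (monom n a x)^2))"
      by (rule sum.cong) (auto simp: inner)
    also have "\<dots> = p x - lam * (\<Sum>a\<in>?M. m a * (monom n a x)^2)"
      using P(2) by (simp add: sum_subtractf sum_distrib_left)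
    also have "\<dots> = p x - lam * (\<Sum>i<n. (x i)\<^sup>2) ^ d" using m(2) by simp
    finally show ?thesis by simp
  qed
  show ?thesis unfolding dsos_def using dd eq by blast
qed

end
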